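(* Let $\rho$ be a density operator, $O$ a Hermitian observable, $V$ a unitary and $H$ a Hermitian operator on a finite-dimensional Hilbert space. For $\theta\in\mathbb{R}$ let $\mathcal{U}_\theta(X)=e^{i\theta H}Xe^{-i\theta H}$ and $\mathcal{L}(\theta)=\operatorname{Tr}[\rho\,\mathcal{U}_\theta(V^\dagger OV)]$. Let $\phi\in\mathbb{R}$ and $r>0$ with $r\le\frac{3}{4\omega^{(\max)}(H)}$. Then $$\operatorname{Var}_{\theta\sim\mathcal{U}(\phi,r)}[\mathcal{L}(\theta)]\ge\frac{r^4}{45}\operatorname{Tr}[\rho\,\mathcal{U}^{(2)}_\phi(V^\dagger OV)]^2-\frac{2\,\omega^{(\max)}(H)^2\,\big\|[H,[H,e^{i\phi H}V^\dagger OVe^{-i\phi H}]]\big\|_\infty^2}{135}r^6,$$ where $\mathcal{U}^{(2)}_\phi(X)=\frac{d^2}{d\theta^2}\mathcal{U}_\theta(X)\big|_{\theta=\phi}$.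
   Context: $\omega^{(\max)}(H)=\lambda_{\max}(H)-\lambda_{\min}(H)$ (difference of largest and smallest eigenvalue). $\|\cdot\|_\infty$ is the operator norm. $\mathcal{U}(\phi,r)$ is the uniform distribution on $[\phi-r,\phi+r]$. *)

theory Defs
  imports "HOL-Analysis.Analysis" "HOL-Probability.Probability"
begin

type_synonym 'n cmat = "complex^'n^'n"

definition cadjoint :: "'n::finite cmat \<Rightarrow> 'n cmat" where
  "cadjoint A = (\<chi> i j. cnj (A $ j $ i))"

definition cscale :: "complex \<Rightarrow> 'n::finite cmat \<Rightarrow> 'n cmat" where
  "cscale c A = (\<chi> i j. c * A $ i $ j)"

primrec matpow :: "'n::finite cmat \<Rightarrow> nat \<Rightarrow> 'n cmat" where
  "matpow A 0 = mat 1"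
| "matpow A (Suc k) = A ** matpow A k"

definition mexp :: "'n::finite cmat \<Rightarrow> 'n cmat" where
  "mexp A = (\<Sum>k. (1 / fact k) *\<^sub>R matpow A k)"

definition hermitian :: "'n::finite cmat \<Rightarrow> bool" where
  "hermitian A \<longleftrightarrow> cadjoint A = A"

definition unitary :: "'n::finite cmat \<Rightarrow> bool" where
  "unitary U \<longleftrightarrow> cadjoint U ** U = mat 1 \<and> U ** cadjoint U = mat 1"

definition density_op :: "'n::finite cmat \<Rightarrow> bool" where
  "density_op \<rho> \<longleftrightarrow> hermitian \<rho>
     \<and> (\<forall>v::complex^'n. 0 \<le> Re (\<Sum>i\<in>UNIV. cnj (v $ i) * (\<rho> *v v) $ i))
     \<and> trace \<rho> = 1"

definition commutator :: "'n::finite cmat \<Rightarrow> 'n cmat \<Rightarrow> 'n cmat" where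
  "commutator A B = A ** B - B ** A"

text \<open>Real eigenvalues of a matrix (all eigenvalues, for Hermitian matrices).\<close>
definition real_eigenvalues :: "'n::finite cmat \<Rightarrow> real set" where
  "real_eigenvalues A = {l. \<exists>v::complex^'n. v \<noteq> 0 \<and> A *v v = complex_of_real l *s v}"

definition omega_max :: "'n::finite cmat \<Rightarrow> real" where
  "omega_max H = Max (real_eigenvalues H) - Min (real_eigenvalues H)"

definition opnorm :: "'n::finite cmat \<Rightarrow> real" where
  "opnorm A = onorm (\<lambda>x::complex^'n. A *v x)"

definition conjU :: "'n::finite cmat \<Rightarrow> real \<Rightarrow> 'n cmat \<Rightarrow> 'n cmat" where
  "conjU H \<theta> X = mexp (cscale (\<i> * of_real \<theta>) H) ** X ** mexp (cscale (- \<i> * of_real \<theta>) H)"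

definition conjU2 :: "'n::finite cmat \<Rightarrow> real \<Rightarrow> 'n cmat \<Rightarrow> 'n cmat" where
  "conjU2 H \<phi> X = vector_derivative (\<lambda>t. vector_derivative (\<lambda>s. conjU H s X) (at t)) (at \<phi>)"

definition unif_var :: "real \<Rightarrow> real \<Rightarrow> (real \<Rightarrow> real) \<Rightarrow> real" where
  "unif_var \<phi> r f = prob_space.variance (uniform_measure lborel {\<phi> - r..\<phi> + r}) f"

end

theory Submission
  imports Defs "HOL-Probability.Probability"
begin

definition cinner :: "complex^'n::finite \<Rightarrow> complex^'n \<Rightarrow> complex" where
  "cinner x y = (\<Sum>i\<in>UNIV. cnj (x$i) * y$i)"

definition diagm :: "('n::finite \<Rightarrow> complex) \<Rightarrow> complex^'n^'n" where
  "diagm d = (\<chi> i j. if i = j then d i else 0)"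

lemma cadjoint_nth[simp]: "cadjoint A $ i $ j = cnj (A $ j $ i)"
  by (simp add: cadjoint_def)

lemma cadjoint_cadjoint[simp]: "cadjoint (cadjoint A) = A"
  by (simp add: vec_eq_iff)

lemma cadjoint_mult: "cadjoint (A ** B) = cadjoint B ** cadjoint A"
  by (simp add: vec_eq_iff matrix_matrix_mult_def mult.commute)

lemma cadjoint_mat1[simp]: "cadjoint (mat 1) = mat 1"
  by (simp add: vec_eq_iff mat_def)

lemma diagm_nth[simp]: "diagm d $ i $ j = (if i = j then d i else 0)"
  by (simp add: diagm_def)

lemma diagm_mult_left: "(diagm d ** A) $ i $ j = d i * A $ i $ j"
proof -
  have "(diagm d ** A) $ i $ j = (\<Sum>k\<in>UNIV. (if i = k then d i else 0) * A$k$j)"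
    by (simp add: matrix_matrix_mult_def)
  also have "\<dots> = (\<Sum>k\<in>UNIV. if i = k then d i * A$k$j else 0)"
    by (rule sum.cong) auto
  finally have "(diagm d ** A) $ i $ j = (\<Sum>k\<in>UNIV. if i = k then d i * A$k$j else 0)" .
  thus ?thesis by simp
qed

lemma diagm_mult_right: "(A ** diagm d) $ i $ j = A $ i $ j * d j"
proof -
  have "(A ** diagm d) $ i $ j = (\<Sum>k\<in>UNIV. A$i$k * (if k = j then d k else 0))"
    by (simp add: matrix_matrix_mult_def)
  also have "\<dots> = (\<Sum>k\<in>UNIV. if k = j then A$i$k * d j else 0)"
    by (rule sum.cong) auto
  finally have "(A ** diagm d) $ i $ j = (\<Sum>k\<in>UNIV. if k = j then A$i$k * d j else 0)" .
  thus ?thesis by simp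
qed

lemma diagm_mult_diagm: "diagm d ** diagm e = diagm (\<lambda>i. d i * e i)"
  by (simp add: vec_eq_iff diagm_mult_left)

lemma diagm_one: "diagm (\<lambda>i. 1) = mat 1"
  by (simp add: vec_eq_iff mat_def)

lemma cadjoint_diagm: "cadjoint (diagm d) = diagm (\<lambda>i. cnj (d i))"
  by (simp add: vec_eq_iff)

lemma cinner_mult: "cinner (A *v x) y = cinner x (cadjoint A *v y)"
  by (simp add: cinner_def matrix_vector_mult_def sum_distrib_left sum_distrib_right
      mult_ac) (rule sum.swap)

lemma norm_sq_cinner: "complex_of_real ((norm x)^2) = cinner x x"
proof -
  have "(norm x)^2 = (\<Sum>i\<in>UNIV. (cmod (x$i))^2)"
    by (simp add: norm_vec_def L2_set_def sum_nonneg)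
  hence "complex_of_real ((norm x)^2) = (\<Sum>i\<in>UNIV. complex_of_real ((cmod (x$i))^2))"
    by simp
  also have "\<dots> = cinner x x"
    unfolding cinner_def by (rule sum.cong) (auto simp: complex_norm_square mult.commute simp flip: of_real_power)
  finally show ?thesis .
qed

lemma norm_eq_cinner: "(norm x)^2 = Re (cinner x x)"
  by (metis Re_complex_of_real norm_sq_cinner)

lemma cinner_add_left: "cinner (x + y) z = cinner x z + cinner y z"
  by (simp add: cinner_def sum.distrib ring_distribs)
lemma cinner_add_right: "cinner z (x + y) = cinner z x + cinner z y"
  by (simp add: cinner_def sum.distrib ring_distribs)
lemma cinner_diff_left: "cinner (x - y) z = cinner x z - cinner y z"
  by (simp add: cinner_def sum_subtractf ring_distribs)
lemma cinner_diff_right: "cinner z (x - y) = cinner z x - cinner z y"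
  by (simp add: cinner_def sum_subtractf ring_distribs)
lemma cinner_scale_left: "cinner (c *s x) z = cnj c * cinner x z"
  by (simp add: cinner_def sum_distrib_left mult_ac)
lemma cinner_scale_right: "cinner z (c *s x) = c * cinner z x"
  by (simp add: cinner_def sum_distrib_left mult_ac)
lemma cinner_cnj: "cnj (cinner x y) = cinner y x"
  by (simp add: cinner_def mult.commute)

lemma mv_add: "A *v (x + y) = A *v x + A *v (y::complex^'n::finite)"
  by (simp add: matrix_vector_right_distrib)
lemma mv_scale: "A *v (c *s x) = c *s (A *v (x::complex^'n::finite))"
  by (simp add: vec_eq_iff matrix_vector_mult_def sum_distrib_left mult_ac)

lemma unitary_cinner:
  assumes "cadjoint U ** U = mat 1"
  shows "cinner (U *v x) (U *v y) = cinner x y"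
  by (simp add: cinner_mult matrix_vector_mul_assoc assms)

lemma unitary_norm:
  assumes "cadjoint U ** U = mat 1"
  shows "norm (U *v x) = norm x"
proof -
  have "(norm (U *v x))^2 = (norm x)^2"
    by (simp add: norm_eq_cinner unitary_cinner[OF assms])
  thus ?thesis by (simp add: power2_eq_iff_nonneg)
qed

definition orthon :: "complex^'n::finite^'n \<Rightarrow> bool" where
  "orthon U \<longleftrightarrow> (\<forall>a b. cinner (column a U) (column b U) = (if a = b then 1 else 0))"

lemma adj_mult_nth: "(cadjoint U ** A ** U) $ p $ q = cinner (column p U) (A *v column q U)"
  by (simp add: matrix_matrix_mult_def matrix_vector_mult_def cinner_def column_def
      sum_distrib_left sum_distrib_right mult_ac) (rule sum.swap)

lemma adj_mult_nth2: "(cadjoint U ** U) $ p $ q = cinner (column p U) (column q U)"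
  by (simp add: matrix_matrix_mult_def cinner_def column_def)

lemma orthon_iff: "orthon U \<longleftrightarrow> cadjoint U ** U = mat 1"
  by (auto simp: orthon_def vec_eq_iff adj_mult_nth2 mat_def)

lemma cont_nth[continuous_intros]:
  "continuous_on S f \<Longrightarrow> continuous_on S (\<lambda>x. f x $ i)"
  unfolding continuous_on_def by (auto intro: tendsto_vec_nth)

lemma closed_orthon: "closed {U::complex^'n::finite^'n. orthon U}"
proof -
  have "{U::complex^'n::finite^'n. orthon U} =
     (\<Inter>a. \<Inter>b. {U. (\<Sum>i\<in>UNIV. cnj (U$i$a) * U$i$b) = (if a = b then 1 else 0)})"
    by (auto simp: orthon_def cinner_def column_def)
  moreover have "closed {U::complex^'n::finite^'n. (\<Sum>i\<in>UNIV. cnj (U$i$a) * U$i$b) = (if a = b then 1 else 0)}"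
    for a b
    by (intro closed_Collect_eq continuous_intros)
  ultimately show ?thesis by (auto intro!: closed_INT)
qed

lemma orthon_entry_le: "orthon U \<Longrightarrow> norm (U $ i $ j) \<le> 1"
proof -
  assume "orthon U"
  hence "cinner (column j U) (column j U) = 1" by (auto simp: orthon_def)
  hence "(norm (column j U))^2 = 1" by (metis Re_complex_of_real norm_sq_cinner one_complex.simps(1))
  hence "norm (column j U) = 1" using norm_ge_zero[of "column j U"] by (auto simp: power2_eq_1_iff)
  moreover have "norm (column j U $ i) \<le> norm (column j U)" by (rule Finite_Cartesian_Product.norm_nth_le)
  ultimately show ?thesis by (simp add: column_def)
qed

lemma norm_le_sum_vec: "norm (x::'a::real_normed_vector^'n::finite) \<le> (\<Sum>i\<in>UNIV. norm (x$i))"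
  unfolding norm_vec_def by (rule L2_set_le_sum) simp

lemma bounded_orthon: "bounded {U::complex^'n::finite^'n. orthon U}"
proof -
  have "norm U \<le> real CARD('n) * real CARD('n)" if "orthon U" for U :: "complex^'n^'n"
  proof -
    have "norm U \<le> (\<Sum>i\<in>UNIV. norm (U$i))" by (rule norm_le_sum_vec)
    also have "\<dots> \<le> (\<Sum>i\<in>(UNIV::'n set). \<Sum>j\<in>(UNIV::'n set). 1)"
    proof (rule sum_mono)
      fix i
      have "norm (U$i) \<le> (\<Sum>j\<in>UNIV. norm (U$i$j))" by (rule norm_le_sum_vec)
      also have "\<dots> \<le> (\<Sum>j\<in>(UNIV::'n set). 1)"
        by (rule sum_mono) (rule orthon_entry_le[OF that])
      finally show "norm (U$i) \<le> (\<Sum>j\<in>(UNIV::'n set). 1)" .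
    qed
    finally show ?thesis by simp
  qed
  thus ?thesis unfolding bounded_iff by blast
qed

lemma compact_orthon: "compact {U::complex^'n::finite^'n. orthon U}"
  using bounded_orthon closed_orthon compact_eq_bounded_closed by blast

definition Fobj :: "complex^'n::finite^'n \<Rightarrow> ('n \<Rightarrow> real) \<Rightarrow> complex^'n^'n \<Rightarrow> real" where
  "Fobj A c U = (\<Sum>j\<in>UNIV. c j * Re (cinner (column j U) (A *v column j U)))"

lemma cont_Fobj: "continuous_on S (Fobj A c)"
  unfolding Fobj_def cinner_def column_def matrix_vector_mult_def
  by (intro continuous_intros)

lemma quad_zero:
  fixes u v :: real
  assumes "\<And>s. v * s^2 + 2 * u * s \<le> 0"
  shows "u = 0"
proof (rule ccontr)
  assume "u \<noteq> 0"
  define d where "d = \<bar>v\<bar> + 1"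
  have d: "d > 0" by (simp add: d_def)
  have "v * (u/d)^2 + 2 * u * (u/d) = (u^2/d^2) * (v + 2 * d)"
    using d by (simp add: field_simps power2_eq_square)
  moreover have "u^2/d^2 > 0" using \<open>u \<noteq> 0\<close> d by simp
  moreover have "v + 2 * d > 0" by (simp add: d_def)
  ultimately have "v * (u/d)^2 + 2 * u * (u/d) > 0"
    by (metis mult_pos_pos times_divide_eq_left)
  with assms[of "u/d"] show False by simp
qed

lemma mv_diff: "A *v (x - y) = A *v x - A *v (y::complex^'n::finite)"
  by (simp add: matrix_vector_mult_diff_distrib)

lemma herm_cinner: "hermitian A \<Longrightarrow> cinner x (A *v y) = cinner (A *v x) y"
  unfolding hermitian_def by (metis cinner_mult)

lemma column_lambda[simp]: "column j (\<chi> i j. f j $ i) = f j"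
  by (simp add: column_def vec_eq_iff)

lemmas cinner_simps = cinner_add_left cinner_add_right cinner_diff_left cinner_diff_right
  cinner_scale_left cinner_scale_right mv_add mv_diff mv_scale

lemma perturb_orthon:
  fixes U :: "complex^'n::finite^'n" and p q :: 'n and z :: complex and s :: real
  assumes orth: "orthon U" and pq: "p \<noteq> q" and z: "cnj z * z = 1"
  defines "u \<equiv> \<lambda>j. column j U"
  defines "t \<equiv> complex_of_real (1 / sqrt (1 + s^2))"
  defines "col \<equiv> \<lambda>j. if j = p then t *s (u p + (of_real s * z) *s u q)
                  else if j = q then t *s (u q - (of_real s * cnj z) *s u p) else u j"
  shows "orthon (\<chi> i j. col j $ i)"
proof -
  have o: "cinner (u a) (u b) = (if a = b then 1 else 0)" for a b
    using orth by (simp add: orthon_def u_def)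
  have ct: "cnj t = t" by (simp add: t_def)
  have tt: "t * t * (1 + of_real s * of_real s) = 1"
  proof -
    have "(sqrt (1 + s^2))^2 = 1 + s^2" by simp
    moreover have "1 + s * s \<noteq> 0" by (smt (verit) zero_le_square)
    ultimately have "(1 / sqrt (1 + s^2)) * (1 / sqrt (1 + s^2)) * (1 + s * s) = 1"
      by (simp add: power2_eq_square field_simps)
    hence "complex_of_real ((1 / sqrt (1 + s^2)) * (1 / sqrt (1 + s^2)) * (1 + s * s)) = 1"
      by simp
    moreover have "t * t * (1 + of_real s * of_real s) = complex_of_real ((1 / sqrt (1 + s^2)) * (1 / sqrt (1 + s^2)) * (1 + s * s))"
      unfolding t_def by (simp only: of_real_mult of_real_add of_real_1)
    ultimately show ?thesis by simp
  qed
  have zz: "z * cnj z = 1" using z by (simp add: mult.commute)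
  show ?thesis
    unfolding orthon_def column_lambda
  proof (intro allI)
    fix a b
    show "cinner (col a) (col b) = (if a = b then 1 else 0)"
    proof (cases "a = p")
      case True
      show ?thesis
      proof (cases "b = p")
        case True
        have "cinner (col a) (col b) = t * t * (1 + of_real s * of_real s * (cnj z * z))"
          using \<open>a = p\<close> True pq by (simp add: col_def cinner_simps o ct algebra_simps)
        thus ?thesis using z tt \<open>a = p\<close> True by simp
      next
        case False
        show ?thesis
        proof (cases "b = q")
          case True
          show ?thesis using \<open>a = p\<close> True pq
            by (simp add: col_def cinner_simps o ct algebra_simps)
        next
          case False
          thus ?thesis using \<open>a = p\<close> \<open>b \<noteq> p\<close> pq
            by (simp add: col_def cinner_simps o ct algebra_simps)
        qed
      qed
    next
      case False
      show ?thesis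
      proof (cases "a = q")
        case True
        show ?thesis
        proof (cases "b = p")
          case True
          show ?thesis using \<open>a = q\<close> True pq
            by (simp add: col_def cinner_simps o ct algebra_simps)
        next
          case False
          show ?thesis
          proof (cases "b = q")
            case True
            have "cinner (col a) (col b) = t * t * (1 + of_real s * of_real s * (z * cnj z))"
              using \<open>a = q\<close> True pq by (simp add: col_def cinner_simps o ct algebra_simps)
            thus ?thesis using zz tt \<open>a = q\<close> True by simp
          next
            case False
            thus ?thesis using \<open>a = q\<close> \<open>b \<noteq> p\<close> pq
              by (simp add: col_def cinner_simps o ct algebra_simps)
          qed
        qed
      next
        case False
        thus ?thesis using \<open>a \<noteq> p\<close> pq
          by (simp add: col_def cinner_simps o ct algebra_simps)
      qed
    qed
  qed
qed

lemma Re_ofreal_mult: "Re (complex_of_real r * w) = r * Re w"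
  by simp

lemma perturb_F:
  fixes A U :: "complex^'n::finite^'n" and p q :: 'n and z :: complex and s :: real
  assumes herm: "hermitian A" and pq: "p \<noteq> q" and z: "cnj z * z = 1"
  defines "u \<equiv> \<lambda>j. column j U"
  defines "t \<equiv> complex_of_real (1 / sqrt (1 + s^2))"
  defines "col \<equiv> \<lambda>j. if j = p then t *s (u p + (of_real s * z) *s u q)
                  else if j = q then t *s (u q - (of_real s * cnj z) *s u p) else u j"
  shows "Fobj A c (\<chi> i j. col j $ i) - Fobj A c U =
     (1 / (1 + s^2)) * (c p - c q) * (s^2 * (Re (cinner (u q) (A *v u q)) - Re (cinner (u p) (A *v u p)))
        + 2 * s * Re (z * cinner (u p) (A *v u q)))"
proof -
  define \<tau> where "\<tau> = 1 / sqrt (1 + s^2)"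
  have t: "t = of_real \<tau>" by (simp add: t_def \<tau>_def)
  have ct: "cnj t = t" by (simp add: t_def)
  have pos: "1 + s * s > 0" by (smt (verit) zero_le_square)
  have \<tau>\<tau>: "\<tau> * \<tau> = 1 / (1 + s^2)"
    using pos by (simp add: \<tau>_def power2_eq_square field_simps)
  define b where "b = cinner (u p) (A *v u q)"
  define ap where "ap = cinner (u p) (A *v u p)"
  define aq where "aq = cinner (u q) (A *v u q)"
  have bqp: "cinner (u q) (A *v u p) = cnj b"
    unfolding b_def using herm_cinner[OF herm] cinner_cnj by metis
  have e1: "cinner (col p) (A *v col p) = t * t * (ap + of_real s * z * b + of_real s * cnj z * cnj b
       + of_real s * of_real s * (cnj z * z) * aq)"
    using pq by (simp add: col_def cinner_simps ct bqp ap_def aq_def b_def[symmetric] algebra_simps)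
  have e2: "cinner (col q) (A *v col q) = t * t * (aq - of_real s * z * b - of_real s * cnj z * cnj b
       + of_real s * of_real s * (cnj z * z) * ap)"
    using pq by (simp add: col_def cinner_simps ct bqp ap_def aq_def b_def[symmetric] algebra_simps)
  have r1: "Re (cinner (col p) (A *v col p)) = \<tau> * \<tau> * (Re ap + s * s * Re aq + 2 * s * Re (z * b))"
    unfolding e1 z t by (simp add: algebra_simps)
  have r2: "Re (cinner (col q) (A *v col q)) = \<tau> * \<tau> * (Re aq + s * s * Re ap - 2 * s * Re (z * b))"
    unfolding e2 z t by (simp add: algebra_simps)
  have "Fobj A c (\<chi> i j. col j $ i) - Fobj A c U =
      (\<Sum>j\<in>UNIV. c j * (Re (cinner (col j) (A *v col j)) - Re (cinner (u j) (A *v u j))))"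
    by (simp add: Fobj_def u_def sum_subtractf algebra_simps)
  also have "\<dots> = (\<Sum>j\<in>{p,q}. c j * (Re (cinner (col j) (A *v col j)) - Re (cinner (u j) (A *v u j))))"
    by (rule sum.mono_neutral_right) (auto simp: col_def)
  also have "\<dots> = c p * (Re (cinner (col p) (A *v col p)) - Re ap) + c q * (Re (cinner (col q) (A *v col q)) - Re aq)"
    using pq by (simp add: ap_def aq_def)
  also have "\<dots> = (1 / (1 + s^2)) * (c p - c q) * (s^2 * (Re aq - Re ap) + 2 * s * Re (z * b))"
  proof -
    define K where "K = 1 / (1 + s^2)"
    have kk: "K * (1 + s * s) = 1" using pos by (simp add: K_def power2_eq_square)
    have "c p * (K * (Re ap + s * s * Re aq + 2 * s * Re (z * b)) - Re ap) +
          c q * (K * (Re aq + s * s * Re ap - 2 * s * Re (z * b)) - Re aq)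
          - K * (c p - c q) * (s^2 * (Re aq - Re ap) + 2 * s * Re (z * b))
          = (K * (1 + s * s) - 1) * (c p * Re ap + c q * Re aq)"
      by (simp add: algebra_simps power2_eq_square)
    hence "c p * (K * (Re ap + s * s * Re aq + 2 * s * Re (z * b)) - Re ap) +
          c q * (K * (Re aq + s * s * Re ap - 2 * s * Re (z * b)) - Re aq)
          = K * (c p - c q) * (s^2 * (Re aq - Re ap) + 2 * s * Re (z * b))"
      using kk by simp
    thus ?thesis unfolding r1 r2 \<tau>\<tau> K_def .
  qed
  finally show ?thesis by (simp add: ap_def aq_def b_def)
qed

lemma cinner_herm_real: "hermitian A \<Longrightarrow> Im (cinner x (A *v x)) = 0"
proof -
  assume h: "hermitian A"
  have "cnj (cinner x (A *v x)) = cinner x (A *v x)"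
    by (metis cinner_cnj herm_cinner[OF h])
  thus ?thesis by (metis Reals_cnj_iff complex_is_Real_iff)
qed

theorem spectral:
  fixes A :: "complex^'n::finite^'n"
  assumes herm: "hermitian A"
  shows "\<exists>U (l::'n \<Rightarrow> real). unitary U \<and> A = U ** diagm (\<lambda>i. of_real (l i)) ** cadjoint U"
proof -
  define c :: "'n \<Rightarrow> real" where "c = (\<lambda>j. real (to_nat j))"
  have cinj: "a = b" if "c a = c b" for a b
    using that inj_to_nat unfolding c_def by (metis injD of_nat_eq_iff)
  have ne: "{U::complex^'n^'n. orthon U} \<noteq> {}"
    using orthon_iff[of "mat 1 :: complex^'n^'n"] by (auto simp: matrix_mul_lid)
  obtain U0 where U0: "orthon U0" and mx: "\<And>V. orthon V \<Longrightarrow> Fobj A c V \<le> Fobj A c U0"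
    using continuous_attains_sup[OF compact_orthon ne cont_Fobj[of _ A c]] by auto
  define u where "u = (\<lambda>j. column j U0)"
  have off: "cinner (u p) (A *v u q) = 0" if pq: "p \<noteq> q" for p q
  proof -
    define b where "b = cinner (u p) (A *v u q)"
    have key: "Re (z * b) = 0" if z: "cnj z * z = 1" for z
    proof -
      have "(c p - c q) * (s^2 * (Re (cinner (u q) (A *v u q)) - Re (cinner (u p) (A *v u p)))
              + 2 * s * Re (z * b)) \<le> 0" for s
      proof -
        define t where "t \<equiv> complex_of_real (1 / sqrt (1 + s^2))"
        define col where "col \<equiv> \<lambda>j. if j = p then t *s (u p + (of_real s * z) *s u q)
                  else if j = q then t *s (u q - (of_real s * cnj z) *s u p) else u j"
        have "orthon (\<chi> i j. col j $ i)"
          using perturb_orthon[OF U0 pq z, of s] unfolding col_def t_def u_def .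
        hence le: "Fobj A c (\<chi> i j. col j $ i) - Fobj A c U0 \<le> 0" using mx by simp
        have pos: "1 + s^2 > 0" by (smt (verit) zero_le_power2)
        define Y where "Y = (s^2 * (Re (cinner (u q) (A *v u q)) - Re (cinner (u p) (A *v u p)))
              + 2 * s * Re (z * b))"
        have "(1 / (1 + s^2)) * (c p - c q) * Y \<le> 0"
          using le unfolding col_def t_def u_def perturb_F[OF herm pq z, where U=U0 and s=s and c=c]
          unfolding Y_def b_def u_def .
        hence "(c p - c q) * Y / (1 + s^2) \<le> 0" by simp
        hence "(c p - c q) * Y \<le> 0" using pos by (simp add: divide_le_0_iff)
        thus ?thesis unfolding Y_def .
      qed
      hence "\<And>s. ((c p - c q) * (Re (cinner (u q) (A *v u q)) - Re (cinner (u p) (A *v u p)))) * s^2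
               + 2 * ((c p - c q) * Re (z * b)) * s \<le> 0"
        by (simp add: algebra_simps)
      from quad_zero[OF this] have "(c p - c q) * Re (z * b) = 0" .
      moreover have "c p \<noteq> c q" using cinj pq by blast
      ultimately show ?thesis by simp
    qed
    have "Re b = 0" using key[of 1] by simp
    moreover have "Im b = 0" using key[of "\<i>"] by simp
    ultimately show ?thesis unfolding b_def by (simp add: complex_eq_iff)
  qed
  have u1: "cadjoint U0 ** U0 = mat 1" using U0 orthon_iff by blast
  hence u2: "U0 ** cadjoint U0 = mat 1" using matrix_left_right_inverse by blast
  define l where "l = (\<lambda>j. Re (cinner (u j) (A *v u j)))"
  have B: "cadjoint U0 ** A ** U0 = diagm (\<lambda>j. of_real (l j))"
  proof (subst vec_eq_iff, intro allI, subst vec_eq_iff, intro allI)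
    fix p q
    show "(cadjoint U0 ** A ** U0) $ p $ q = diagm (\<lambda>j. complex_of_real (l j)) $ p $ q"
    proof (cases "p = q")
      case True
      have "Im (cinner (u q) (A *v u q)) = 0" by (rule cinner_herm_real[OF herm])
      thus ?thesis using True by (simp add: adj_mult_nth l_def u_def complex_eq_iff)
    next
      case False
      thus ?thesis using off[OF False] by (simp add: adj_mult_nth u_def)
    qed
  qed
  have "U0 ** (cadjoint U0 ** A ** U0) ** cadjoint U0 = (U0 ** cadjoint U0) ** A ** (U0 ** cadjoint U0)"
    by (simp add: matrix_mul_assoc)
  also have "\<dots> = A" by (simp add: u2 matrix_mul_lid matrix_mul_rid)
  finally have "A = U0 ** diagm (\<lambda>j. of_real (l j)) ** cadjoint U0" using B by simp
  moreover have "unitary U0" using u1 u2 by (simp add: unitary_def)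
  ultimately show ?thesis by blast
qed

lemma diagm_mv: "(diagm d *v w) $ j = d j * w $ j"
proof -
  have "(diagm d *v w) $ j = (\<Sum>k\<in>UNIV. (if j = k then d j else 0) * w $ k)"
    by (simp add: matrix_vector_mult_def)
  also have "\<dots> = (\<Sum>k\<in>UNIV. if k = j then d j * w $ k else 0)"
    by (rule sum.cong) auto
  finally show ?thesis by simp
qed

lemma unitary_D:
  assumes "unitary U" shows "cadjoint U ** U = mat 1" "U ** cadjoint U = mat 1"
  using assms by (auto simp: unitary_def)

lemma eig_range:
  fixes H U :: "complex^'n::finite^'n" and l :: "'n \<Rightarrow> real"
  assumes U: "unitary U" and H: "H = U ** diagm (\<lambda>i. of_real (l i)) ** cadjoint U"
  shows "real_eigenvalues H = range l"
proof
  note u = unitary_D[OF U]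
  let ?D = "diagm (\<lambda>i. complex_of_real (l i))"
  show "range l \<subseteq> real_eigenvalues H"
  proof
    fix x assume "x \<in> range l"
    then obtain j where j: "x = l j" by auto
    define v where "v = U *v axis j 1"
    have "cadjoint U *v v = axis j 1" by (simp add: v_def matrix_vector_mul_assoc u)
    hence v0: "v \<noteq> 0" by (metis axis_eq_0_iff matrix_vector_mult_0_right one_neq_zero)
    have "?D *v axis j 1 = complex_of_real (l j) *s axis j 1"
      by (simp add: vec_eq_iff diagm_mv axis_def)
    hence "H *v v = complex_of_real x *s v"
      by (simp add: H v_def j matrix_vector_mul_assoc[symmetric] mv_scale)
         (simp add: matrix_vector_mul_assoc u mv_scale)
    thus "x \<in> real_eigenvalues H" using v0 by (auto simp: real_eigenvalues_def)
  qed
  show "real_eigenvalues H \<subseteq> range l"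
  proof
    fix x assume "x \<in> real_eigenvalues H"
    then obtain v where v0: "v \<noteq> 0" and hv: "H *v v = complex_of_real x *s v"
      by (auto simp: real_eigenvalues_def)
    define w where "w = cadjoint U *v v"
    have vw: "v = U *v w" by (simp add: w_def matrix_vector_mul_assoc u)
    hence "w \<noteq> 0" using v0 by auto
    then obtain j where wj: "w $ j \<noteq> 0" by (auto simp: vec_eq_iff)
    have cHU: "cadjoint U ** H ** U = (cadjoint U ** U) ** ?D ** (cadjoint U ** U)"
      by (simp add: H matrix_mul_assoc)
    have "cadjoint U *v (H *v v) = (cadjoint U ** H ** U) *v w"
      by (simp add: vw matrix_vector_mul_assoc matrix_mul_assoc)
    hence "?D *v w = cadjoint U *v (H *v v)"
      by (simp add: cHU u)
    also have "\<dots> = complex_of_real x *s w" by (simp add: hv w_def mv_scale)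
    finally have "(?D *v w) $ j = complex_of_real x * w $ j" by simp
    hence "complex_of_real (l j) * w $ j = complex_of_real x * w $ j" by (simp add: diagm_mv)
    hence "l j = x" using wj by simp
    thus "x \<in> range l" by auto
  qed
qed

lemma omega_eq:
  fixes H U :: "complex^'n::finite^'n" and l :: "'n \<Rightarrow> real"
  assumes U: "unitary U" and H: "H = U ** diagm (\<lambda>i. of_real (l i)) ** cadjoint U"
  shows "omega_max H = Max (range l) - Min (range l)"
  by (simp add: omega_max_def eig_range[OF U H])

lemma cscale_sandwich: "cscale c (U ** diagm d ** V) = U ** diagm (\<lambda>i. c * d i) ** V"
  by (simp add: vec_eq_iff cscale_def matrix_matrix_mult_def diagm_def sum_distrib_left
      mult_ac if_distrib cong: if_cong)

lemma matpow_sandwich: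
  assumes "cadjoint U ** U = mat 1" "U ** cadjoint U = mat 1"
  shows "matpow (U ** G ** cadjoint U) k = U ** matpow G k ** cadjoint U"
proof (induction k)
  case 0
  then show ?case using assms by simp
next
  case (Suc k)
  have "matpow (U ** G ** cadjoint U) (Suc k) = (U ** G ** cadjoint U) ** (U ** matpow G k ** cadjoint U)"
    using Suc by simp
  also have "\<dots> = U ** G ** (cadjoint U ** U) ** matpow G k ** cadjoint U"
    by (simp add: matrix_mul_assoc)
  also have "\<dots> = U ** matpow G (Suc k) ** cadjoint U"
    using assms by (simp add: matrix_mul_assoc)
  finally show ?case .
qed

lemma matpow_diagm: "matpow (diagm d) k = diagm (\<lambda>i. d i ^ k)"
  by (induction k) (simp_all add: diagm_one diagm_mult_diagm)

lemma linear_sandwich: "linear (\<lambda>G::complex^'n::finite^'n. U ** G ** V)"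
  by (rule linearI)
     (simp_all add: vec_eq_iff matrix_matrix_mult_def ring_distribs sum.distrib
       scaleR_sum_right sum_distrib_left mult_ac)

lemma bl_sandwich: "bounded_linear (\<lambda>G::complex^'n::finite^'n. U ** G ** V)"
  using linear_sandwich linear_conv_bounded_linear by blast

lemma sums_diagm:
  assumes "\<And>i. (\<lambda>k. f k i) sums (s i)"
  shows "(\<lambda>k. diagm (f k)) sums (diagm s)"
  unfolding sums_def
proof (rule vec_tendstoI, rule vec_tendstoI)
  fix i j
  have "(\<lambda>n. (\<Sum>k<n. diagm (f k)) $ i $ j) = (\<lambda>n. if i = j then (\<Sum>k<n. f k i) else 0)"
    by auto
  moreover have "((\<lambda>n. if i = j then (\<Sum>k<n. f k i) else 0) \<longlonglongrightarrow> diagm s $ i $ j)"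
    using assms[of i] by (auto simp: sums_def)
  ultimately show "((\<lambda>n. (\<Sum>k<n. diagm (f k)) $ i $ j) \<longlonglongrightarrow> diagm s $ i $ j)" by simp
qed

lemma mexp_sandwich:
  assumes U: "unitary U"
  shows "mexp (U ** diagm d ** cadjoint U) = U ** diagm (\<lambda>i. exp (d i)) ** cadjoint U"
proof -
  note u = unitary_D[OF U]
  have "(\<lambda>k. diagm (\<lambda>i. d i ^ k /\<^sub>R fact k)) sums diagm (\<lambda>i. exp (d i))"
    by (rule sums_diagm) (rule exp_converges)
  from bounded_linear.sums[OF bl_sandwich[of U "cadjoint U"] this]
  have "(\<lambda>k. U ** diagm (\<lambda>i. d i ^ k /\<^sub>R fact k) ** cadjoint U) sums (U ** diagm (\<lambda>i. exp (d i)) ** cadjoint U)" .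
  moreover have "U ** diagm (\<lambda>i. d i ^ k /\<^sub>R fact k) ** cadjoint U
      = (1 / fact k) *\<^sub>R matpow (U ** diagm d ** cadjoint U) k" for k
    unfolding matpow_sandwich[OF u] matpow_diagm
    by (simp add: vec_eq_iff matrix_matrix_mult_def scaleR_sum_right divide_inverse
        if_distrib cong: if_cong)
  ultimately have S: "(\<lambda>k. (1 / fact k) *\<^sub>R matpow (U ** diagm d ** cadjoint U) k) sums (U ** diagm (\<lambda>i. exp (d i)) ** cadjoint U)"
    by simp
  show ?thesis unfolding mexp_def using sums_unique[OF S] by simp
qed

lemma bl_axis: "bounded_linear (axis i :: 'a::real_normed_vector \<Rightarrow> 'a^'n::finite)"
proof (rule bounded_linear_intro[where K=1])
  fix x y :: 'a and r :: real
  show "axis i (x + y) = (axis i x + axis i y :: 'a^'n)" by (simp add: axis_def vec_eq_iff)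
  show "axis i (r *\<^sub>R x) = (r *\<^sub>R axis i x :: 'a^'n)" by (simp add: axis_def vec_eq_iff)
  have "norm (axis i x :: 'a^'n) \<le> (\<Sum>j\<in>UNIV. norm ((axis i x :: 'a^'n) $ j))"
    by (rule norm_le_sum_vec)
  also have "\<dots> = norm x" by (simp add: axis_def if_distrib cong: if_cong)
  finally show "norm (axis i x :: 'a^'n) \<le> norm x * 1" by simp
qed

lemma vec_sum_axis: "(x::'a::real_normed_vector^'n::finite) = (\<Sum>i\<in>UNIV. axis i (x $ i))"
  by (simp add: vec_eq_iff axis_def if_distrib cong: if_cong)

lemma vec_vd:
  fixes f :: "real \<Rightarrow> 'a::real_normed_vector^'n::finite"
  assumes "\<And>i. ((\<lambda>x. f x $ i) has_vector_derivative f' $ i) F"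
  shows "(f has_vector_derivative f') F"
proof -
  have "((\<lambda>x. \<Sum>i\<in>UNIV. axis i (f x $ i)) has_vector_derivative (\<Sum>i\<in>UNIV. axis i (f' $ i))) F"
    by (intro has_vector_derivative_sum bounded_linear.has_vector_derivative[OF bl_axis] assms)
  thus ?thesis by (simp flip: vec_sum_axis)
qed

definition Mf :: "complex^'n::finite^'n \<Rightarrow> ('n \<Rightarrow> real) \<Rightarrow> nat \<Rightarrow> real \<Rightarrow> complex^'n^'n" where
  "Mf Y l m \<theta> = (\<chi> j k. Y$j$k * (\<i> * of_real (l j - l k))^m * exp (of_real \<theta> * (\<i> * of_real (l j - l k))))"

lemma scalar_vd:
  fixes y c :: complex
  shows "((\<lambda>x::real. y * c^m * exp (of_real x * c)) has_vector_derivative (y * c^(Suc m) * exp (of_real t * c))) (at t)"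
proof -
  have "((\<lambda>z. y * c^m * exp (z * c)) has_field_derivative (y * c^(Suc m) * exp (of_real t * c))) (at (of_real t))"
    by (auto intro!: derivative_eq_intros simp: algebra_simps)
  from has_vector_derivative_real_field[OF this] show ?thesis .
qed

lemma Mf_vd: "((\<lambda>\<theta>. Mf Y l m \<theta>) has_vector_derivative Mf Y l (Suc m) t) (at t)"
  unfolding Mf_def
  by (intro vec_vd) (simp only: vec_lambda_beta scalar_vd)

lemma conjU_eq:
  fixes H U X :: "complex^'n::finite^'n" and l :: "'n \<Rightarrow> real"
  assumes U: "unitary U" and H: "H = U ** diagm (\<lambda>i. of_real (l i)) ** cadjoint U"
  shows "conjU H \<theta> X = U ** Mf (cadjoint U ** X ** U) l 0 \<theta> ** cadjoint U"
proof -
  define Y where "Y = cadjoint U ** X ** U"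
  have e1: "mexp (cscale (\<i> * of_real \<theta>) H) = U ** diagm (\<lambda>i. exp (\<i> * of_real \<theta> * of_real (l i))) ** cadjoint U"
    unfolding H cscale_sandwich mexp_sandwich[OF U] ..
  have e2: "mexp (cscale (- \<i> * of_real \<theta>) H) = U ** diagm (\<lambda>i. exp (- \<i> * of_real \<theta> * of_real (l i))) ** cadjoint U"
    unfolding H cscale_sandwich mexp_sandwich[OF U] ..
  have "conjU H \<theta> X = U ** (diagm (\<lambda>i. exp (\<i> * of_real \<theta> * of_real (l i))) ** Y **
       diagm (\<lambda>i. exp (- \<i> * of_real \<theta> * of_real (l i)))) ** cadjoint U"
    unfolding conjU_def e1 e2 Y_def by (simp add: matrix_mul_assoc)
  also have "diagm (\<lambda>i. exp (\<i> * of_real \<theta> * of_real (l i))) ** Y **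
       diagm (\<lambda>i. exp (- \<i> * of_real \<theta> * of_real (l i))) = Mf Y l 0 \<theta>"
  proof -
    have "exp (\<i> * of_real \<theta> * of_real (l j)) * Y $ j $ k * exp (- \<i> * of_real \<theta> * of_real (l k))
        = Y $ j $ k * exp (of_real \<theta> * (\<i> * of_real (l j - l k)))" for j k
    proof -
      have "exp (\<i> * of_real \<theta> * of_real (l j)) * exp (- \<i> * of_real \<theta> * of_real (l k))
          = exp (of_real \<theta> * (\<i> * of_real (l j - l k)))"
        by (simp add: exp_add[symmetric] algebra_simps)
      thus ?thesis by (simp add: mult_ac)
    qed
    thus ?thesis by (simp add: vec_eq_iff Mf_def diagm_mult_left diagm_mult_right)
  qed
  finally show ?thesis unfolding Y_def .
qed

lemma scaleR_complex: "r *\<^sub>R (z::complex) = of_real r * z"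
  by (simp add: scaleR_conv_of_real)

lemma linear_trace:
  fixes A :: "complex^'n::finite^'n"
  shows "linear (\<lambda>M::complex^'n::finite^'n. trace (A ** M))"
  by (rule linearI)
     (simp_all add: trace_def matrix_matrix_mult_def ring_distribs sum.distrib
       scaleR_sum_right sum_distrib_left mult_ac scaleR_complex)

lemma bl_Gfun:
  fixes A U V :: "complex^'n::finite^'n"
  shows "bounded_linear (\<lambda>M::complex^'n::finite^'n. Re (trace (A ** (U ** M ** V))))"
proof -
  have "bounded_linear (\<lambda>M::complex^'n::finite^'n. trace (A ** M))"
    using linear_trace linear_conv_bounded_linear by blast
  from bounded_linear_compose[OF this bl_sandwich[of U V]]
  have "bounded_linear (\<lambda>M::complex^'n::finite^'n. trace (A ** (U ** M ** V)))" by (simp add: o_def)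
  from bounded_linear_compose[OF bounded_linear_Re this] show ?thesis by (simp add: o_def)
qed

definition Gf :: "complex^'n::finite^'n \<Rightarrow> complex^'n^'n \<Rightarrow> complex^'n^'n \<Rightarrow> ('n \<Rightarrow> real) \<Rightarrow> nat \<Rightarrow> real \<Rightarrow> real" where
  "Gf \<rho> U Y l m \<theta> = Re (trace (\<rho> ** (U ** Mf Y l m \<theta> ** cadjoint U)))"

lemma Gf_deriv: "DERIV (Gf \<rho> U Y l m) t :> Gf \<rho> U Y l (Suc m) t"
  unfolding has_real_derivative_iff_has_vector_derivative Gf_def
  by (rule bounded_linear.has_vector_derivative[OF bl_Gfun Mf_vd])

lemma sandwich_vd: "((\<lambda>\<theta>. U ** Mf Y l m \<theta> ** V) has_vector_derivative (U ** Mf Y l (Suc m) t ** V)) (at t)"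
  by (rule bounded_linear.has_vector_derivative[OF bl_sandwich Mf_vd])

lemma conjU2_eq:
  fixes H U X :: "complex^'n::finite^'n" and l :: "'n \<Rightarrow> real"
  assumes U: "unitary U" and H: "H = U ** diagm (\<lambda>i. of_real (l i)) ** cadjoint U"
  shows "conjU2 H \<phi> X = U ** Mf (cadjoint U ** X ** U) l 2 \<phi> ** cadjoint U"
proof -
  define Y where "Y = cadjoint U ** X ** U"
  have "(\<lambda>t. vector_derivative (\<lambda>s. conjU H s X) (at t)) = (\<lambda>t. U ** Mf Y l 1 t ** cadjoint U)"
  proof
    fix t
    show "vector_derivative (\<lambda>s. conjU H s X) (at t) = U ** Mf Y l 1 t ** cadjoint U"
      unfolding conjU_eq[OF U H] Y_def[symmetric]
      by (rule vector_derivative_at) (simp add: sandwich_vd[where m=0, simplified])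
  qed
  hence "conjU2 H \<phi> X = vector_derivative (\<lambda>t. U ** Mf Y l 1 t ** cadjoint U) (at \<phi>)"
    unfolding conjU2_def by simp
  also have "\<dots> = U ** Mf Y l 2 \<phi> ** cadjoint U"
    by (rule vector_derivative_at) (simp add: sandwich_vd[where m=1, simplified] numeral_2_eq_2)
  finally show ?thesis unfolding Y_def .
qed

lemma opnorm_bound: "norm (A *v x) \<le> opnorm A * norm (x::complex^'n::finite)"
  unfolding opnorm_def by (rule onorm[OF matrix_vector_mul_bounded_linear])

lemma opnorm_le: "(\<And>x. norm (A *v x) \<le> c * norm (x::complex^'n::finite)) \<Longrightarrow> opnorm A \<le> c"
  unfolding opnorm_def by (rule onorm_le)

lemma opnorm_nonneg: "0 \<le> opnorm (A::complex^'n::finite^'n)"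
  unfolding opnorm_def by (rule onorm_pos_le[OF matrix_vector_mul_bounded_linear])

lemma opnorm_iso:
  fixes U V A :: "complex^'n::finite^'n"
  assumes "cadjoint U ** U = mat 1" "cadjoint V ** V = mat 1"
  shows "opnorm (U ** A ** V) \<le> opnorm A"
proof (rule opnorm_le)
  fix x
  have "norm ((U ** A ** V) *v x) = norm (A *v (V *v x))"
    by (simp add: matrix_vector_mul_assoc[symmetric] unitary_norm[OF assms(1)])
  also have "\<dots> \<le> opnorm A * norm (V *v x)" by (rule opnorm_bound)
  also have "\<dots> = opnorm A * norm x" by (simp add: unitary_norm[OF assms(2)])
  finally show "norm ((U ** A ** V) *v x) \<le> opnorm A * norm x" .
qed

lemma opnorm_unitary_eq:
  fixes U A :: "complex^'n::finite^'n"
  assumes U: "unitary U"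
  shows "opnorm (U ** A ** cadjoint U) = opnorm A"
proof (rule antisym)
  note u = unitary_D[OF U]
  show "opnorm (U ** A ** cadjoint U) \<le> opnorm A"
    by (rule opnorm_iso) (simp_all add: u)
  have "A = cadjoint U ** (U ** A ** cadjoint U) ** U"
  proof -
    have "cadjoint U ** (U ** A ** cadjoint U) ** U = (cadjoint U ** U) ** A ** (cadjoint U ** U)"
      by (simp add: matrix_mul_assoc)
    thus ?thesis by (simp add: u)
  qed
  also have "opnorm \<dots> \<le> opnorm (U ** A ** cadjoint U)"
    by (rule opnorm_iso) (simp_all add: u)
  finally show "opnorm A \<le> opnorm (U ** A ** cadjoint U)" .
qed

lemma norm_sq_vec: "(norm (x::complex^'n::finite))^2 = (\<Sum>i\<in>UNIV. (norm (x$i))^2)"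
  by (simp add: norm_vec_def L2_set_def sum_nonneg)

lemma diag_bound:
  assumes "\<And>i. norm (d i) \<le> c" "0 \<le> c"
  shows "norm (diagm d *v x) \<le> c * norm (x::complex^'n::finite)"
proof -
  have "(norm (diagm d *v x))^2 = (\<Sum>i\<in>UNIV. (norm (d i) * norm (x$i))^2)"
    by (simp add: norm_sq_vec diagm_mv norm_mult)
  also have "\<dots> \<le> (\<Sum>i\<in>UNIV. (c * norm (x$i))^2)"
    by (intro sum_mono power_mono mult_right_mono assms) auto
  also have "\<dots> = (c * norm x)^2"
    by (simp add: norm_sq_vec power_mult_distrib sum_distrib_left)
  finally show ?thesis
    using assms(2) by (simp add: power2_le_iff_abs_le)
qed

lemma comm_bound:
  fixes A B :: "complex^'n::finite^'n" and l :: "'n \<Rightarrow> real"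
  assumes lab: "\<And>j. a \<le> l j \<and> l j \<le> b"
    and B: "\<And>j k. B $ j $ k = \<i> * of_real (l j - l k) * A $ j $ k"
  shows "opnorm B \<le> (b - a) * opnorm A"
proof (rule opnorm_le)
  fix x :: "complex^'n"
  define c where "c = (a + b) / 2"
  define D where "D = diagm (\<lambda>j. \<i> * of_real (l j - c))"
  have Dmv: "(D *v y) $ j = \<i> * of_real (l j - c) * y $ j" for y j
    by (simp add: D_def diagm_mv)
  have Amv: "(A *v y) $ j = (\<Sum>k\<in>UNIV. A$j$k * y$k)" for y j
    by (simp add: matrix_vector_mult_def)
  have Bx: "B *v x = D *v (A *v x) - A *v (D *v x)"
  proof -
    have "(B *v x) $ j = (D *v (A *v x) - A *v (D *v x)) $ j" for j
    proof -
      have "(B *v x) $ j = (\<Sum>k\<in>UNIV. \<i> * of_real (l j - l k) * A $ j $ k * x $ k)"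
        by (simp add: matrix_vector_mult_def B)
      also have "\<dots> = (\<Sum>k\<in>UNIV. \<i> * of_real (l j - c) * (A $ j $ k * x $ k) - A $ j $ k * (\<i> * of_real (l k - c) * x $ k))"
        by (rule sum.cong) (auto simp: algebra_simps)
      also have "\<dots> = (D *v (A *v x) - A *v (D *v x)) $ j"
        by (simp only: vector_minus_component Dmv Amv sum_subtractf sum_distrib_left)
      finally show ?thesis .
    qed
    thus ?thesis by (simp add: vec_eq_iff)
  qed
  have dn: "norm (\<i> * complex_of_real (l j - c)) \<le> (b - a) / 2" for j
  proof -
    have "norm (\<i> * complex_of_real (l j - c)) = \<bar>l j - c\<bar>"
      by (simp only: norm_mult norm_ii norm_of_real) simp
    moreover have "\<bar>l j - c\<bar> \<le> (b - a) / 2" using lab[of j] unfolding c_def by (simp add: abs_if field_simps)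
    ultimately show ?thesis by simp
  qed
  have ab: "0 \<le> (b - a) / 2" using lab[of undefined] by (auto simp: field_simps)
  have "norm (B *v x) \<le> norm (D *v (A *v x)) + norm (A *v (D *v x))"
    unfolding Bx by (rule norm_triangle_ineq4)
  also have "\<dots> \<le> (b - a) / 2 * norm (A *v x) + opnorm A * norm (D *v x)"
    by (intro add_mono opnorm_bound) (unfold D_def, rule diag_bound[OF dn ab])
  also have "\<dots> \<le> (b - a) / 2 * (opnorm A * norm x) + opnorm A * ((b - a) / 2 * norm x)"
    by (intro add_mono mult_left_mono opnorm_bound opnorm_nonneg ab)
       (unfold D_def, rule diag_bound[OF dn ab])
  also have "\<dots> = (b - a) * opnorm A * norm x" by (simp add: algebra_simps)
  finally show "norm (B *v x) \<le> (b - a) * opnorm A * norm x" .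
qed

lemma norm_axis_c: "norm (axis i (1::complex) :: complex^'n::finite) = 1"
proof -
  have "(\<Sum>j\<in>UNIV. (norm ((axis i (1::complex) :: complex^'n) $ j))^2) = (\<Sum>j\<in>(UNIV::'n set). if j = i then 1 else 0)"
    by (rule sum.cong) (auto simp: axis_def)
  hence "(norm (axis i (1::complex) :: complex^'n))^2 = 1"
    by (simp add: norm_sq_vec)
  thus ?thesis by (simp add: power2_eq_1_iff)
qed

lemma diag_le_opnorm: "norm (C $ i $ i) \<le> opnorm (C::complex^'n::finite^'n)"
proof -
  have "(C *v axis i 1) $ i = C $ i $ i"
    by (simp add: matrix_vector_mult_def axis_def if_distrib cong: if_cong)
  hence "norm (C $ i $ i) \<le> norm (C *v axis i 1)"
    by (metis Finite_Cartesian_Product.norm_nth_le)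
  also have "\<dots> \<le> opnorm C * norm (axis i (1::complex) :: complex^'n)" by (rule opnorm_bound)
  finally show ?thesis by (simp add: norm_axis_c)
qed

lemma trace_diagm_mult: "trace (diagm d ** C) = (\<Sum>i\<in>UNIV. d i * C $ i $ i)"
  by (simp add: trace_def diagm_mult_left)

lemma density_trace_bound:
  fixes \<rho> B :: "complex^'n::finite^'n"
  assumes dens: "density_op \<rho>"
  shows "\<bar>Re (trace (\<rho> ** B))\<bar> \<le> opnorm B"
proof -
  have herm: "hermitian \<rho>" and psd: "\<And>v. 0 \<le> Re (\<Sum>i\<in>UNIV. cnj (v $ i) * (\<rho> *v v) $ i)"
    and tr: "trace \<rho> = 1"
    using dens by (auto simp: density_op_def)
  obtain Q p where Q: "unitary Q" and rq: "\<rho> = Q ** diagm (\<lambda>i. of_real (p i)) ** cadjoint Q"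
    using spectral[OF herm] by blast
  note q = unitary_D[OF Q]
  let ?D = "diagm (\<lambda>i. complex_of_real (p i))"
  define C where "C = cadjoint Q ** B ** Q"
  have QrQ: "cadjoint Q ** \<rho> ** Q = ?D"
  proof -
    have "cadjoint Q ** \<rho> ** Q = (cadjoint Q ** Q) ** ?D ** (cadjoint Q ** Q)"
      by (simp add: rq matrix_mul_assoc)
    thus ?thesis by (simp add: q)
  qed
  have pnn: "0 \<le> p i" for i
  proof -
    have "complex_of_real (p i) = (cadjoint Q ** \<rho> ** Q) $ i $ i" by (simp add: QrQ)
    also have "\<dots> = cinner (column i Q) (\<rho> *v column i Q)" by (rule adj_mult_nth)
    finally have "p i = Re (cinner (column i Q) (\<rho> *v column i Q))"
      by (metis Re_complex_of_real)
    thus ?thesis using psd[of "column i Q"] by (simp add: cinner_def)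
  qed
  have psum: "(\<Sum>i\<in>UNIV. p i) = 1"
  proof -
    have "trace \<rho> = trace (?D ** (cadjoint Q ** Q))"
      unfolding rq by (metis matrix_mul_assoc trace_mul_sym)
    also have "\<dots> = (\<Sum>i\<in>UNIV. complex_of_real (p i))" by (simp add: q trace_def)
    finally have "complex_of_real (\<Sum>i\<in>UNIV. p i) = 1" using tr by simp
    thus ?thesis by (metis of_real_eq_1_iff)
  qed
  have "trace (\<rho> ** B) = trace (?D ** C)"
  proof -
    have "trace (\<rho> ** B) = trace (Q ** (?D ** cadjoint Q ** B))"
      by (simp add: rq matrix_mul_assoc)
    also have "\<dots> = trace ((?D ** cadjoint Q ** B) ** Q)"
      by (rule trace_mul_sym)
    also have "\<dots> = trace (?D ** C)" by (simp add: C_def matrix_mul_assoc)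
    finally show ?thesis .
  qed
  hence "\<bar>Re (trace (\<rho> ** B))\<bar> = \<bar>\<Sum>i\<in>UNIV. p i * Re (C $ i $ i)\<bar>"
    by (simp add: trace_diagm_mult)
  also have "\<dots> \<le> (\<Sum>i\<in>UNIV. \<bar>p i * Re (C $ i $ i)\<bar>)" by (rule sum_abs)
  also have "\<dots> \<le> (\<Sum>i\<in>UNIV. p i * opnorm C)"
  proof (rule sum_mono)
    fix i
    have "\<bar>Re (C $ i $ i)\<bar> \<le> opnorm C"
      using abs_Re_le_cmod[of "C $ i $ i"] diag_le_opnorm[of C i] by linarith
    thus "\<bar>p i * Re (C $ i $ i)\<bar> \<le> p i * opnorm C"
      using pnn[of i] by (simp add: abs_mult mult_left_mono)
  qed
  also have "\<dots> = opnorm C" by (simp add: sum_distrib_right[symmetric] psum)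
  also have "\<dots> \<le> opnorm B" unfolding C_def by (rule opnorm_iso) (simp_all add: q)
  finally show ?thesis .
qed

lemma ftc_real:
  fixes F f :: "real \<Rightarrow> real"
  assumes "\<And>x. (F has_real_derivative f x) (at x)" "a \<le> b"
  shows "integral {a..b} f = F b - F a"
proof -
  have "(f has_integral (F b - F a)) {a..b}"
  proof (rule fundamental_theorem_of_calculus[OF assms(2)])
    fix x assume "x \<in> {a..b}"
    have "(F has_real_derivative f x) (at x within {a..b})"
      by (rule has_field_derivative_at_within[OF assms(1)])
    thus "(F has_vector_derivative f x) (at x within {a..b})"
      by (simp add: has_real_derivative_iff_has_vector_derivative)
  qed
  thus ?thesis by (rule integral_unique)
qed

lemma var_core:
  fixes L :: "real \<Rightarrow> real" and \<phi> r m c0 c1 c2 c3 K :: real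
  assumes r: "0 < r" and cont: "continuous_on UNIV L" and K: "0 \<le> K"
    and tay: "\<And>\<theta>. \<bar>L \<theta> - (c0 + c1 * (\<theta> - \<phi>) + c2 / 2 * (\<theta> - \<phi>)^2 + c3 / 6 * (\<theta> - \<phi>)^3)\<bar> \<le> K / 24 * (\<theta> - \<phi>)^4"
  shows "integral {\<phi> - r..\<phi> + r} (\<lambda>\<theta>. (L \<theta> - m)^2) / (2 * r) \<ge> r^4 / 45 * c2^2 - \<bar>c2\<bar> * K * r^6 / 180"
proof -
  define a where "a = \<phi> - r"
  define b where "b = \<phi> + r"
  have ab: "a \<le> b" using r by (simp add: a_def b_def)
  define h where "h = (\<lambda>\<theta>. (\<theta> - \<phi>)^2 - r^2 / 3)"
  define P where "P = (\<lambda>\<theta>. c0 + c1 * (\<theta> - \<phi>) + c2 / 2 * (\<theta> - \<phi>)^2 + c3 / 6 * (\<theta> - \<phi>)^3)"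
  define R where "R = (\<lambda>\<theta>. L \<theta> - P \<theta>)"
  define Q where "Q = (\<lambda>\<theta>. c2 * P \<theta> * h \<theta> - c2 * m * h \<theta> - (c2^2 / 4) * (h \<theta>)^2)"
  define B where "B = (\<lambda>\<theta>. K * r^2 / 36 * (\<theta> - \<phi>)^4)"
  have contL: "continuous_on {a..b} L" using cont continuous_on_subset by blast
  have cR: "continuous_on {a..b} R" unfolding R_def P_def by (intro continuous_intros contL)
  have ch: "continuous_on {a..b} h" unfolding h_def by (intro continuous_intros)
  have cQ: "continuous_on {a..b} Q" unfolding Q_def P_def h_def by (intro continuous_intros)
  have cB: "continuous_on {a..b} B" unfolding B_def by (intro continuous_intros)
  have iLm: "(\<lambda>\<theta>. (L \<theta> - m)^2) integrable_on {a..b}"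
    by (intro integrable_continuous_interval continuous_intros contL)
  have iQ: "Q integrable_on {a..b}" by (rule integrable_continuous_interval[OF cQ])
  have iRh: "(\<lambda>\<theta>. R \<theta> * h \<theta>) integrable_on {a..b}"
    by (intro integrable_continuous_interval continuous_intros cR ch)
  have iB: "B integrable_on {a..b}" by (rule integrable_continuous_interval[OF cB])
  have iQRh: "(\<lambda>\<theta>. Q \<theta> + c2 * (R \<theta> * h \<theta>)) integrable_on {a..b}"
    by (intro integrable_continuous_interval continuous_intros cR ch cQ)
  have pw: "Q \<theta> + c2 * (R \<theta> * h \<theta>) \<le> (L \<theta> - m)^2" for \<theta>
  proof -
    have e: "Q \<theta> + c2 * (R \<theta> * h \<theta>) = 2 * (c2/2) * (L \<theta> - m) * h \<theta> - (c2/2)^2 * (h \<theta>)^2"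
      unfolding Q_def R_def by (simp add: algebra_simps power2_eq_square)
    have "0 \<le> (L \<theta> - m - (c2/2) * h \<theta>)^2" by simp
    thus ?thesis unfolding e by (simp add: algebra_simps power2_eq_square)
  qed
  have I1: "integral {a..b} (\<lambda>\<theta>. Q \<theta> + c2 * (R \<theta> * h \<theta>)) \<le> integral {a..b} (\<lambda>\<theta>. (L \<theta> - m)^2)"
    by (rule integral_le[OF iQRh iLm pw])
  have I2: "integral {a..b} (\<lambda>\<theta>. Q \<theta> + c2 * (R \<theta> * h \<theta>)) = integral {a..b} Q + c2 * integral {a..b} (\<lambda>\<theta>. R \<theta> * h \<theta>)"
    using integral_add[OF iQ integrable_on_cmult_left[OF iRh, of c2]] by simp
  define Ft where "Ft = (\<lambda>t::real.
      c2 * (c0 * (t^3/3 - r^2*t/3) + c1 * (t^4/4 - r^2*t^2/6) + c2/2 * (t^5/5 - r^2*t^3/9) + c3/6 * (t^6/6 - r^2*t^4/12))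
      - c2 * m * (t^3/3 - r^2*t/3) - (c2^2/4) * (t^5/5 - 2*r^2*t^3/9 + r^4*t/9))"
  define F where "F = (\<lambda>\<theta>. Ft (\<theta> - \<phi>))"
  have dF: "(F has_real_derivative Q x) (at x)" for x
    unfolding F_def Ft_def Q_def P_def h_def
    by (auto intro!: derivative_eq_intros simp: field_simps eval_nat_numeral)
  have Fr: "Ft r - Ft (-r) = 2 * c2^2 * r^5 / 45"
    unfolding Ft_def by (simp add: field_simps power2_eq_square power3_eq_cube eval_nat_numeral)
  have IQ: "integral {a..b} Q = 2 * c2^2 * r^5 / 45"
    unfolding ftc_real[OF dF ab] using Fr by (simp add: F_def a_def b_def)
  define Gt where "Gt = (\<lambda>t::real. K * r^2 / 36 * t^5 / 5)"
  define G where "G = (\<lambda>\<theta>. Gt (\<theta> - \<phi>))"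
  have dG: "(G has_real_derivative B x) (at x)" for x
    unfolding G_def Gt_def B_def
    by (auto intro!: derivative_eq_intros simp: field_simps eval_nat_numeral)
  have Gr: "Gt r - Gt (-r) = K * r^7 / 90"
    unfolding Gt_def by (simp add: field_simps eval_nat_numeral)
  have IB: "integral {a..b} B = K * r^7 / 90"
    unfolding ftc_real[OF dG ab] using Gr by (simp add: G_def a_def b_def)
  have Rh: "\<bar>R \<theta> * h \<theta>\<bar> \<le> B \<theta>" if "\<theta> \<in> {a..b}" for \<theta>
  proof -
    have t: "\<bar>\<theta> - \<phi>\<bar> \<le> r" using that by (auto simp: a_def b_def abs_le_iff)
    have "\<bar>\<theta> - \<phi>\<bar>^2 \<le> r^2" by (rule power_mono[OF t abs_ge_zero])
    hence "(\<theta> - \<phi>)^2 \<le> r^2" by simp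
    moreover have "0 \<le> (\<theta> - \<phi>)^2" by simp
    ultimately have hb: "\<bar>h \<theta>\<bar> \<le> 2 * r^2 / 3" unfolding h_def abs_le_iff by linarith
    have Rb: "\<bar>R \<theta>\<bar> \<le> K / 24 * (\<theta> - \<phi>)^4" using tay[of \<theta>] by (simp add: R_def P_def)
    have "\<bar>R \<theta> * h \<theta>\<bar> = \<bar>R \<theta>\<bar> * \<bar>h \<theta>\<bar>" by (simp add: abs_mult)
    also have "\<dots> \<le> (K / 24 * (\<theta> - \<phi>)^4) * (2 * r^2 / 3)"
      by (intro mult_mono Rb hb) (auto intro!: mult_nonneg_nonneg K)
    also have "\<dots> = B \<theta>" by (simp add: B_def field_simps)
    finally show ?thesis .
  qed
  have IRh: "\<bar>integral {a..b} (\<lambda>\<theta>. R \<theta> * h \<theta>)\<bar> \<le> K * r^7 / 90"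
  proof -
    have "integral {a..b} (\<lambda>\<theta>. R \<theta> * h \<theta>) \<le> integral {a..b} B"
      by (rule integral_le[OF iRh iB]) (use Rh in \<open>auto simp: abs_le_iff\<close>)
    moreover have "integral {a..b} (\<lambda>\<theta>. - B \<theta>) \<le> integral {a..b} (\<lambda>\<theta>. R \<theta> * h \<theta>)"
    proof (rule integral_le[OF integrable_neg[OF iB] iRh])
      fix \<theta> assume "\<theta> \<in> {a..b}"
      from Rh[OF this] show "- B \<theta> \<le> R \<theta> * h \<theta>" by linarith
    qed
    moreover have "integral {a..b} (\<lambda>\<theta>. - B \<theta>) = - integral {a..b} B" by (rule integral_neg)
    ultimately show ?thesis using IB by (simp add: abs_le_iff)
  qed
  have "c2 * integral {a..b} (\<lambda>\<theta>. R \<theta> * h \<theta>) \<ge> - (\<bar>c2\<bar> * (K * r^7 / 90))"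
  proof -
    have "\<bar>c2 * integral {a..b} (\<lambda>\<theta>. R \<theta> * h \<theta>)\<bar> \<le> \<bar>c2\<bar> * (K * r^7 / 90)"
      unfolding abs_mult by (rule mult_left_mono[OF IRh abs_ge_zero])
    thus ?thesis by (simp add: abs_le_iff)
  qed
  hence "integral {a..b} (\<lambda>\<theta>. (L \<theta> - m)^2) \<ge> 2 * c2^2 * r^5 / 45 - \<bar>c2\<bar> * (K * r^7 / 90)"
    using I1 I2 IQ by linarith
  hence "integral {a..b} (\<lambda>\<theta>. (L \<theta> - m)^2) / (2 * r) \<ge> (2 * c2^2 * r^5 / 45 - \<bar>c2\<bar> * (K * r^7 / 90)) / (2 * r)"
    using r by (simp add: divide_right_mono)
  moreover have "(2 * c2^2 * r^5 / 45 - \<bar>c2\<bar> * (K * r^7 / 90)) / (2 * r) = r^4 / 45 * c2^2 - \<bar>c2\<bar> * K * r^6 / 180"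
    using r by (simp add: field_simps eval_nat_numeral)
  ultimately show ?thesis unfolding a_def b_def by simp
qed

lemma unif_integral:
  fixes f :: "real \<Rightarrow> real"
  assumes ab: "a < b" and cont: "continuous_on UNIV f"
  shows "integral\<^sup>L (uniform_measure lborel {a..b}) f = integral {a..b} f / (b - a)"
proof -
  have um: "uniform_measure lborel {a..b} = density lborel (\<lambda>x. ennreal (indicator {a..b} x / (b - a)))"
    unfolding uniform_measure_def
  proof (rule arg_cong[where f="density lborel"], rule ext)
    fix x
    show "indicator {a..b} x / emeasure lborel {a..b} = ennreal (indicator {a..b} x / (b - a))"
      using ab by (cases "x \<in> {a..b}") (auto simp: divide_ennreal ennreal_1[symmetric] simp del: ennreal_1)
  qed
  have fm: "f \<in> borel_measurable lborel"
    using cont by (simp add: borel_measurable_continuous_onI)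
  have "integral\<^sup>L (uniform_measure lborel {a..b}) f
      = integral\<^sup>L lborel (\<lambda>x. (indicator {a..b} x / (b - a)) *\<^sub>R f x)"
    unfolding um by (rule integral_density) (use fm ab in auto)
  also have "\<dots> = integral\<^sup>L lborel (\<lambda>x. (1 / (b - a)) * (indicator {a..b} x *\<^sub>R f x))"
    by (rule Bochner_Integration.integral_cong) auto
  also have "\<dots> = (1 / (b - a)) * (LINT x : {a..b} | lborel. f x)"
    by (simp add: set_lebesgue_integral_def)
  also have "(LINT x : {a..b} | lborel. f x) = integral {a..b} f"
    by (rule set_borel_integral_eq_integral(2)[OF borel_integrable_atLeastAtMost'])
       (rule continuous_on_subset[OF cont], simp)
  finally show ?thesis by simp
qed

lemma Mf_Suc_entry: "Mf Y l (Suc m) t $ j $ k = \<i> * of_real (l j - l k) * Mf Y l m t $ j $ k"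
  by (simp add: Mf_def mult_ac)

lemma opnorm_neg: "opnorm (- A) = opnorm (A::complex^'n::finite^'n)"
proof -
  have e: "(- B) *v x = - (B *v x)" for B :: "complex^'n^'n" and x
    by (simp add: vec_eq_iff matrix_vector_mult_def sum_negf)
  have "opnorm (- A) \<le> opnorm A"
    by (rule opnorm_le) (simp add: e opnorm_bound)
  moreover have "opnorm A \<le> opnorm (- A)"
    by (rule opnorm_le) (metis e norm_minus_cancel opnorm_bound)
  ultimately show ?thesis by simp
qed

lemma comm_sandwich:
  fixes H U W :: "complex^'n::finite^'n" and l :: "'n \<Rightarrow> real"
  assumes U: "unitary U" and H: "H = U ** diagm (\<lambda>i. of_real (l i)) ** cadjoint U"
  shows "commutator H (U ** W ** cadjoint U) = U ** (\<chi> j k. of_real (l j - l k) * W $ j $ k) ** cadjoint U"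
proof -
  note u = unitary_D[OF U]
  let ?D = "diagm (\<lambda>i. complex_of_real (l i))"
  have e1: "H ** (U ** W ** cadjoint U) = U ** (?D ** W) ** cadjoint U"
  proof -
    have "H ** (U ** W ** cadjoint U) = U ** ?D ** (cadjoint U ** U) ** W ** cadjoint U"
      by (simp add: H matrix_mul_assoc)
    thus ?thesis by (simp add: u matrix_mul_assoc)
  qed
  have e2: "(U ** W ** cadjoint U) ** H = U ** (W ** ?D) ** cadjoint U"
  proof -
    have "(U ** W ** cadjoint U) ** H = U ** W ** (cadjoint U ** U) ** ?D ** cadjoint U"
      by (simp add: H matrix_mul_assoc)
    thus ?thesis by (simp add: u matrix_mul_assoc)
  qed
  have e3: "?D ** W - W ** ?D = (\<chi> j k. of_real (l j - l k) * W $ j $ k)"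
    by (simp add: vec_eq_iff diagm_mult_left diagm_mult_right algebra_simps)
  have "commutator H (U ** W ** cadjoint U) = U ** (?D ** W) ** cadjoint U - U ** (W ** ?D) ** cadjoint U"
    by (simp add: commutator_def e1 e2)
  also have "\<dots> = U ** (?D ** W - W ** ?D) ** cadjoint U"
    using linear_diff[OF linear_sandwich[of U "cadjoint U"], of "?D ** W" "W ** ?D"] by simp
  finally show ?thesis by (simp add: e3)
qed

lemma cnj_exp_ii: "cnj (exp (\<i> * of_real y)) = exp (- (\<i> * of_real y))"
  by (simp add: exp_cnj)

lemma phase_unitary: "unitary (diagm (\<lambda>j. exp (\<i> * of_real (x j))) :: complex^'n::finite^'n)"
proof -
  have "cnj (exp (\<i> * of_real y)) * exp (\<i> * of_real y) = 1" for y
    by (simp add: cnj_exp_ii flip: exp_add)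
  moreover have "exp (\<i> * of_real y) * cnj (exp (\<i> * of_real y)) = 1" for y
    by (simp add: cnj_exp_ii flip: exp_add)
  ultimately show ?thesis
    by (simp add: unitary_def cadjoint_diagm diagm_mult_diagm diagm_one)
qed

lemma Mf_shift:
  "Mf Y l m t = diagm (\<lambda>j. exp (\<i> * of_real ((t - \<phi>) * l j))) ** Mf Y l m \<phi> **
     cadjoint (diagm (\<lambda>j. exp (\<i> * of_real ((t - \<phi>) * l j))))"
proof -
  have "exp (\<i> * of_real ((t - \<phi>) * l j)) * (Y $ j $ k * (\<i> * of_real (l j - l k))^m *
          exp (of_real \<phi> * (\<i> * of_real (l j - l k)))) * exp (- (\<i> * of_real ((t - \<phi>) * l k)))
      = Y $ j $ k * (\<i> * of_real (l j - l k))^m * exp (of_real t * (\<i> * of_real (l j - l k)))" for j k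
  proof -
    have g: "exp a * (y * exp b) * exp c = y * exp (a + b + c)" for a b c y :: complex
      by (simp add: exp_add mult_ac)
    have "\<i> * of_real ((t - \<phi>) * l j) + of_real \<phi> * (\<i> * of_real (l j - l k)) + - (\<i> * of_real ((t - \<phi>) * l k))
        = of_real t * (\<i> * of_real (l j - l k))"
      by (simp add: algebra_simps)
    thus ?thesis by (simp only: g)
  qed
  note key = this
  define E where "E = diagm (\<lambda>j. exp (\<i> * of_real ((t - \<phi>) * l j)))"
  have "(E ** Mf Y l m \<phi> ** cadjoint E) $ j $ k = Mf Y l m t $ j $ k" for j k
  proof -
    have "(E ** Mf Y l m \<phi> ** cadjoint E) $ j $ k
        = exp (\<i> * of_real ((t - \<phi>) * l j)) * Mf Y l m \<phi> $ j $ k * cnj (exp (\<i> * of_real ((t - \<phi>) * l k)))"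
      unfolding E_def by (simp only: cadjoint_diagm diagm_mult_right diagm_mult_left)
    also have "\<dots> = Mf Y l m t $ j $ k"
      unfolding cnj_exp_ii Mf_def vec_lambda_beta by (rule key)
    finally show ?thesis .
  qed
  thus ?thesis unfolding E_def[symmetric] by (simp add: vec_eq_iff)
qed

theorem corollary2:
  fixes \<rho> Obs V H :: "complex^'n^'n" and \<phi> r :: real and L :: "real \<Rightarrow> real"
  assumes "density_op \<rho>" and "hermitian Obs" and "unitary V" and "hermitian H"
    and "\<And>\<theta>. L \<theta> = Re (trace (\<rho> ** conjU H \<theta> (cadjoint V ** Obs ** V)))"
    and "r > 0" and "4 * omega_max H * r \<le> 3"
  shows "unif_var \<phi> r L \<ge>
      r ^ 4 / 45 * (Re (trace (\<rho> ** conjU2 H \<phi> (cadjoint V ** Obs ** V)))) ^ 2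
      - 2 * (omega_max H) ^ 2
          * (opnorm (commutator H (commutator H (conjU H \<phi> (cadjoint V ** Obs ** V))))) ^ 2
          / 135 * r ^ 6"
proof -
  note dens = assms(1) and herm = assms(4) and Ldef = assms(5) and r = assms(6)
  define X where "X = cadjoint V ** Obs ** V"
  obtain U l where U: "unitary U" and H: "H = U ** diagm (\<lambda>i. of_real (l i)) ** cadjoint U"
    using spectral[OF herm] by blast
  define Y where "Y = cadjoint U ** X ** U"
  define G where "G = Gf \<rho> U Y l"
  have LG: "L \<theta> = G 0 \<theta>" for \<theta>
    using Ldef[of \<theta>] conjU_eq[OF U H, of \<theta> X] by (simp add: G_def Gf_def X_def Y_def)
  have c2eq: "Re (trace (\<rho> ** conjU2 H \<phi> X)) = G 2 \<phi>"
    by (simp add: conjU2_eq[OF U H] G_def Gf_def Y_def)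
  define a where "a = Min (range l)"
  define b where "b = Max (range l)"
  have lab: "a \<le> l j \<and> l j \<le> b" for j
    unfolding a_def b_def by (auto intro: Min_le Max_ge)
  have om: "omega_max H = b - a" using omega_eq[OF U H] by (simp add: a_def b_def)
  define N where "N = opnorm (Mf Y l 2 \<phi>)"
  define Mop where "Mop = opnorm (commutator H (commutator H (conjU H \<phi> X)))"
  have NM: "N = Mop"
  proof -
    have e: "(\<chi> j k. complex_of_real (l j - l k) *
              (\<chi> j k. complex_of_real (l j - l k) * Mf Y l 0 \<phi> $ j $ k) $ j $ k) = - Mf Y l 2 \<phi>"
      by (simp add: vec_eq_iff Mf_def power2_eq_square algebra_simps)
    have "commutator H (commutator H (conjU H \<phi> X)) = U ** (- Mf Y l 2 \<phi>) ** cadjoint U"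
      unfolding conjU_eq[OF U H] comm_sandwich[OF U H] Y_def[symmetric] e ..
    thus ?thesis unfolding Mop_def N_def by (simp add: opnorm_unitary_eq[OF U] opnorm_neg)
  qed
  have Gbound: "\<bar>G m t\<bar> \<le> opnorm (Mf Y l m t)" for m t
  proof -
    have "\<bar>G m t\<bar> \<le> opnorm (U ** Mf Y l m t ** cadjoint U)"
      unfolding G_def Gf_def by (rule density_trace_bound[OF dens])
    thus ?thesis by (simp add: opnorm_unitary_eq[OF U])
  qed
  have c2b: "\<bar>G 2 \<phi>\<bar> \<le> N" using Gbound[of 2 \<phi>] by (simp add: N_def)
  have Nnn: "0 \<le> N" by (simp add: N_def opnorm_nonneg)
  have ba: "0 \<le> b - a" using lab[of undefined] by (auto simp: field_simps)
  define K where "K = (b - a)^2 * N"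
  have K0: "0 \<le> K" using Nnn by (simp add: K_def)
  have G4b: "\<bar>G 4 t\<bar> \<le> K" for t
  proof -
    have sh: "opnorm (Mf Y l 2 t) = N"
      unfolding N_def Mf_shift[of Y l 2 t \<phi>] by (rule opnorm_unitary_eq[OF phase_unitary])
    have "opnorm (Mf Y l (Suc 3) t) \<le> (b - a) * opnorm (Mf Y l 3 t)"
      by (rule comm_bound[OF lab Mf_Suc_entry])
    also have "\<dots> \<le> (b - a) * ((b - a) * opnorm (Mf Y l 2 t))"
    proof (rule mult_left_mono[OF comm_bound[where A="Mf Y l 2 t" and B="Mf Y l 3 t", OF lab] ba])
      fix j k
      show "Mf Y l 3 t $ j $ k = \<i> * complex_of_real (l j - l k) * Mf Y l 2 t $ j $ k"
        using Mf_Suc_entry[of Y l 2 t j k] by (simp add: eval_nat_numeral)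
    qed
    finally have "opnorm (Mf Y l 4 t) \<le> K" unfolding sh K_def by (simp add: power2_eq_square mult_ac)
    thus ?thesis using Gbound[of 4 t] by simp
  qed
  define g where "g = (\<lambda>m x. G m (\<phi> + x))"
  have dg: "\<forall>m x. DERIV (g m) x :> g (Suc m) x"
  proof (intro allI)
    fix m x
    have "DERIV (\<lambda>x. \<phi> + x) x :> 1" by (auto intro!: derivative_eq_intros)
    from DERIV_chain2[OF Gf_deriv this] show "DERIV (g m) x :> g (Suc m) x"
      by (simp add: g_def G_def)
  qed
  have tay: "\<bar>L \<theta> - (G 0 \<phi> + G 1 \<phi> * (\<theta> - \<phi>) + G 2 \<phi> / 2 * (\<theta> - \<phi>)^2 + G 3 \<phi> / 6 * (\<theta> - \<phi>)^3)\<bar>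
      \<le> K / 24 * (\<theta> - \<phi>)^4" for \<theta>
  proof -
    obtain t where "\<bar>t\<bar> \<le> \<bar>\<theta> - \<phi>\<bar>" and ex: "g 0 (\<theta> - \<phi>) =
        (\<Sum>m<4. g m 0 / fact m * (\<theta> - \<phi>)^m) + g 4 t / fact 4 * (\<theta> - \<phi>)^4"
      using Maclaurin_all_le[of g "g 0", OF refl dg] by blast
    have "L \<theta> - (G 0 \<phi> + G 1 \<phi> * (\<theta> - \<phi>) + G 2 \<phi> / 2 * (\<theta> - \<phi>)^2 + G 3 \<phi> / 6 * (\<theta> - \<phi>)^3)
        = G 4 (\<phi> + t) / 24 * (\<theta> - \<phi>)^4"
      using ex by (simp add: LG g_def eval_nat_numeral fact_numeral)
    moreover have "\<bar>G 4 (\<phi> + t) / 24 * (\<theta> - \<phi>)^4\<bar> \<le> K / 24 * (\<theta> - \<phi>)^4"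
    proof -
      have "\<bar>G 4 (\<phi> + t) / 24 * (\<theta> - \<phi>)^4\<bar> = \<bar>G 4 (\<phi> + t)\<bar> / 24 * (\<theta> - \<phi>)^4"
        by (simp add: abs_mult)
      also have "\<dots> \<le> K / 24 * (\<theta> - \<phi>)^4"
        by (intro mult_right_mono divide_right_mono G4b) auto
      finally show ?thesis .
    qed
    ultimately show ?thesis by (simp only:)
  qed
  have Lcont: "continuous_on UNIV L"
  proof -
    have "isCont (G 0) x" for x using Gf_deriv[THEN DERIV_isCont] by (simp add: G_def)
    hence "continuous_on UNIV (G 0)" by (simp add: continuous_on_eq_continuous_at)
    moreover have "L = G 0" using LG by (simp add: fun_eq_iff)
    ultimately show ?thesis by simp
  qed
  define \<mu> where "\<mu> = integral\<^sup>L (uniform_measure lborel {\<phi> - r..\<phi> + r}) L"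
  have ab: "\<phi> - r < \<phi> + r" using r by simp
  have csq: "continuous_on UNIV (\<lambda>x. (L x - \<mu>)^2)" by (intro continuous_intros Lcont)
  have uv: "unif_var \<phi> r L = integral {\<phi> - r..\<phi> + r} (\<lambda>x. (L x - \<mu>)^2) / (2 * r)"
    unfolding unif_var_def \<mu>_def[symmetric] unif_integral[OF ab csq] by simp
  have vc: "unif_var \<phi> r L \<ge> r^4 / 45 * (G 2 \<phi>)^2 - \<bar>G 2 \<phi>\<bar> * K * r^6 / 180"
    unfolding uv by (rule var_core[OF r Lcont K0 tay])
  have "\<bar>G 2 \<phi>\<bar> * K \<le> (b - a)^2 * Mop^2"
  proof -
    have "\<bar>G 2 \<phi>\<bar> * K \<le> N * K" by (rule mult_right_mono[OF c2b K0])
    also have "\<dots> = (b - a)^2 * Mop^2" by (simp add: K_def NM power2_eq_square)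
    finally show ?thesis .
  qed
  hence "\<bar>G 2 \<phi>\<bar> * K * r^6 / 180 \<le> 2 * (b - a)^2 * Mop^2 / 135 * r^6"
  proof -
    assume h: "\<bar>G 2 \<phi>\<bar> * K \<le> (b - a)^2 * Mop^2"
    have r6: "0 \<le> r^6" using r by simp
    have "\<bar>G 2 \<phi>\<bar> * K * r^6 / 180 \<le> (b - a)^2 * Mop^2 * r^6 / 180"
      by (intro divide_right_mono mult_right_mono h r6) auto
    also have "\<dots> \<le> 2 * (b - a)^2 * Mop^2 / 135 * r^6"
      using r6 by (simp add: field_simps)
    finally show ?thesis .
  qed
  with vc show ?thesis
    unfolding X_def[symmetric] c2eq Mop_def[symmetric] om by linarith
qed

end
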